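(* Let $\widetilde\xi$ be a two-parameter (Gaussian) white noise on $\mathbb{R}^2$ and define \[ \widetilde Z(x_1,x_2) = \frac12\int_{x_1}^{x_2}\int_{x_1}^{y_2}\widetilde\xi(dy_1,dy_2),\qquad (x_1,x_2)\in\mathbb{R}^2, \] interpreted as a two-parameter (Wiener) stochastic integral. Fix $\mathbf{x}=(x_1,x_2)\in\mathbb{R}^2$. Then for any $\kappa>0$, and for either choice of sign $\pm$, \[ \limsup_{\varepsilon\to 0}\frac{|\delta^{(1)}_{\pm\varepsilon}\delta^{(2)}_{\varepsilon}\widetilde Z(\mathbf{x})|}{|\varepsilon|^{1+\kappa}}=\infty \] almost surely.
   Context: A two-parameter white noise $\widetilde\xi$ on $\mathbb{R}^2$ is a family of centered Gaussian random variables $\{\widetilde\xi(\varphi):\varphi\in L^2(\mathbb{R}^2)\}$ with $\mathbb{E}[\widetilde\xi(\varphi_1)\widetilde\xi(\varphi_2)]=\langle\varphi_1,\varphi_2\rangle_{L^2(\mathbb{R}^2)}$; the integral $\int_A \widetilde\xi(dy_1,dy_2)$ means $\widetilde\xi(\mathbf 1_A)$. For $\varepsilon\in\mathbb{R}$ the difference operators are $\delta^{(1)}_\varepsilon f(x_1,x_2)=f(x_1+\varepsilon,x_2)-f(x_1,x_2)$ and $\delta^{(2)}_\varepsilon f(x_1,x_2)=f(x_1,x_2+\varepsilon)-f(x_1,x_2)$, so that $\delta^{(1)}_{\pm\varepsilon}\delta^{(2)}_\varepsilon f(\mathbf{x}) = f(x_1\pm\varepsilon,x_2+\varepsilon)-f(x_1\pm\varepsilon,x_2)-f(x_1,x_2+\varepsilon)+f(x_1,x_2)$.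 *)

theory Defs
  imports "HOL-Probability.Probability"
begin

definition sq_int :: "(real \<times> real \<Rightarrow> real) \<Rightarrow> bool" where
  "sq_int f \<longleftrightarrow> f \<in> borel_measurable borel \<and> integrable lborel (\<lambda>y. (f y)\<^sup>2)"

definition centered_gaussian :: "'a measure \<Rightarrow> ('a \<Rightarrow> real) \<Rightarrow> real \<Rightarrow> bool" where
  "centered_gaussian M X v \<longleftrightarrow> X \<in> borel_measurable M \<and>
     (if v = 0 then (AE \<omega> in M. X \<omega> = 0)
      else distributed M lborel X (normal_density 0 (sqrt v)))"

definition white_noise :: "'a measure \<Rightarrow> ((real \<times> real \<Rightarrow> real) \<Rightarrow> 'a \<Rightarrow> real) \<Rightarrow> bool" where
  "white_noise M W \<longleftrightarrow> prob_space M \<and>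
     (\<forall>f. sq_int f \<longrightarrow> centered_gaussian M (W f) (\<integral>y. (f y)\<^sup>2 \<partial>lborel)) \<and>
     (\<forall>f g. sq_int f \<longrightarrow> sq_int g \<longrightarrow>
        (\<integral>\<omega>. W f \<omega> * W g \<omega> \<partial>M) = (\<integral>y. f y * g y \<partial>lborel))"

text \<open>Oriented indicator: the integrand of \<open>\<integral>_a^b\<close> (negative orientation if b < a).\<close>
definition oind :: "real \<Rightarrow> real \<Rightarrow> real \<Rightarrow> real" where
  "oind a b t = (if a \<le> b then indicator {a..b} t else - indicator {b..a} t)"

text \<open>Kernel of \<open>\<integral>_{x1}^{x2} \<integral>_{x1}^{y2} \<xi>(dy1,dy2)\<close>.\<close>
definition zkernel :: "real \<times> real \<Rightarrow> real \<times> real \<Rightarrow> real" where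
  "zkernel x y = oind (fst x) (snd x) (snd y) * oind (fst x) (snd y) (fst y)"

text \<open>Rectangular increment \<open>\<delta>^(1)_{s\<epsilon>} \<delta>^(2)_\<epsilon> f(x)\<close>.\<close>
definition rect_incr :: "(real \<times> real \<Rightarrow> real) \<Rightarrow> real \<Rightarrow> real \<Rightarrow> real \<times> real \<Rightarrow> real" where
  "rect_incr f s e x = f (fst x + s * e, snd x + e) - f (fst x + s * e, snd x)
                       - f (fst x, snd x + e) + f x"

end

theory Submission imports Defs begin

lemma ab_bound: "\<bar>(a::real) * b\<bar> \<le> a\<^sup>2 + b\<^sup>2"
proof -
  have "2 * \<bar>a\<bar> * \<bar>b\<bar> \<le> \<bar>a\<bar>\<^sup>2 + \<bar>b\<bar>\<^sup>2" by (rule sum_squares_bound)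
  moreover have "0 \<le> \<bar>a\<bar> * \<bar>b\<bar>" by simp
  moreover have "\<bar>a\<bar>\<^sup>2 = a\<^sup>2" "\<bar>b\<bar>\<^sup>2 = b\<^sup>2" by simp_all
  moreover have "\<bar>a * b\<bar> = \<bar>a\<bar> * \<bar>b\<bar>" by (rule abs_mult)
  ultimately show ?thesis by linarith
qed

lemma wn_prob: "white_noise M W \<Longrightarrow> prob_space M" by (simp add: white_noise_def)

lemma wn_meas: "white_noise M W \<Longrightarrow> sq_int f \<Longrightarrow> W f \<in> borel_measurable M"
  by (simp add: white_noise_def centered_gaussian_def)

lemma wn_sq_integrable:
  assumes wn: "white_noise M W" and f: "sq_int f"
  shows "integrable M (\<lambda>\<omega>. (W f \<omega>)\<^sup>2)"
proof -
  define v where "v = (\<integral>y. (f y)\<^sup>2 \<partial>lborel)"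
  have cg: "centered_gaussian M (W f) v" using wn f by (simp add: white_noise_def v_def)
  have [measurable]: "W f \<in> borel_measurable M" using wn f by (rule wn_meas)
  show ?thesis
  proof (cases "v = 0")
    case True
    then have "AE \<omega> in M. W f \<omega> = 0" using cg by (simp add: centered_gaussian_def)
    then have ae: "AE \<omega> in M. 0 = (W f \<omega>)\<^sup>2" by auto
    show ?thesis
      apply (rule integrable_cong_AE_imp[of M "\<lambda>_. 0"])
        apply (rule integrable_zero)
       apply measurable
      by (rule ae)
  next
    case False
    then have D: "distributed M lborel (W f) (normal_density 0 (sqrt v))"
      using cg by (simp add: centered_gaussian_def)
    have "0 \<le> v" unfolding v_def by simp
    then have "0 < sqrt v" using False by simp
    then have "integrable lborel (\<lambda>x. normal_density 0 (sqrt v) x * (x - 0)^2)"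
      by (rule integrable_normal_moment)
    then have "integrable lborel (\<lambda>x. normal_density 0 (sqrt v) x * (\<lambda>x. x\<^sup>2) x)" by simp
    then show ?thesis using distributed_integrable[OF D, of "\<lambda>x. x\<^sup>2"] by simp
  qed
qed

lemma wn_prod_integrable:
  assumes wn: "white_noise M W" and f: "sq_int f" and g: "sq_int g"
  shows "integrable M (\<lambda>\<omega>. W f \<omega> * W g \<omega>)"
proof -
  have [measurable]: "W f \<in> borel_measurable M" "W g \<in> borel_measurable M"
    using wn f g by (auto intro: wn_meas)
  have "integrable M (\<lambda>\<omega>. (W f \<omega>)\<^sup>2 + (W g \<omega>)\<^sup>2)"
    using wn_sq_integrable[OF wn f] wn_sq_integrable[OF wn g] by auto
  then show ?thesis
  proof (rule Bochner_Integration.integrable_bound)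
    show "AE \<omega> in M. norm (W f \<omega> * W g \<omega>) \<le> norm ((W f \<omega>)\<^sup>2 + (W g \<omega>)\<^sup>2)"
    proof (intro AE_I2)
      fix \<omega>
      have "\<bar>W f \<omega> * W g \<omega>\<bar> \<le> (W f \<omega>)\<^sup>2 + (W g \<omega>)\<^sup>2"
        by (rule ab_bound)
      then show "norm (W f \<omega> * W g \<omega>) \<le> norm ((W f \<omega>)\<^sup>2 + (W g \<omega>)\<^sup>2)" by simp
    qed
  qed measurable
qed

lemma sq_int_prod:
  assumes f: "sq_int f" and g: "sq_int g"
  shows "integrable lborel (\<lambda>y. f y * g y)"
proof -
  have [measurable]: "f \<in> borel_measurable borel" "g \<in> borel_measurable borel"
    using f g by (auto simp: sq_int_def)
  have "integrable lborel (\<lambda>y. (f y)\<^sup>2 + (g y)\<^sup>2)"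
    using f g by (auto simp: sq_int_def)
  then show ?thesis
  proof (rule Bochner_Integration.integrable_bound)
    show "AE y in lborel. norm (f y * g y) \<le> norm ((f y)\<^sup>2 + (g y)\<^sup>2)"
    proof (intro AE_I2)
      fix y
      have "\<bar>f y * g y\<bar> \<le> (f y)\<^sup>2 + (g y)\<^sup>2"
        by (rule ab_bound)
      then show "norm (f y * g y) \<le> norm ((f y)\<^sup>2 + (g y)\<^sup>2)" by simp
    qed
  qed measurable
qed

lemma sq_int_lin:
  assumes f: "sq_int f" and g: "sq_int g"
  shows "sq_int (\<lambda>y. f y + c * g y)"
proof -
  have [measurable]: "f \<in> borel_measurable borel" "g \<in> borel_measurable borel"
    using f g by (auto simp: sq_int_def)
  have "integrable lborel (\<lambda>y. (f y)\<^sup>2 + c\<^sup>2 * (g y)\<^sup>2 + 2 * c * (f y * g y))"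
    using f g sq_int_prod[OF f g] by (auto simp: sq_int_def)
  moreover have "(\<lambda>y. (f y + c * g y)\<^sup>2) = (\<lambda>y. (f y)\<^sup>2 + c\<^sup>2 * (g y)\<^sup>2 + 2 * c * (f y * g y))"
    by (auto simp: power2_eq_square algebra_simps)
  ultimately show ?thesis by (simp add: sq_int_def)
qed

lemma wn_cov: "white_noise M W \<Longrightarrow> sq_int f \<Longrightarrow> sq_int g \<Longrightarrow>
   (\<integral>\<omega>. W f \<omega> * W g \<omega> \<partial>M) = (\<integral>y. f y * g y \<partial>lborel)"
  by (simp add: white_noise_def)

lemma wn_lin:
  assumes wn: "white_noise M W" and f: "sq_int f" and g: "sq_int g"
  shows "AE \<omega> in M. W (\<lambda>y. f y + c * g y) \<omega> = W f \<omega> + c * W g \<omega>"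
proof -
  define h where "h = (\<lambda>y. f y + c * g y)"
  have h: "sq_int h" unfolding h_def using f g by (rule sq_int_lin)
  interpret prob_space M using wn by (rule wn_prob)
  have [measurable]: "W f \<in> borel_measurable M" "W g \<in> borel_measurable M" "W h \<in> borel_measurable M"
    using wn f g h by (auto intro: wn_meas)
  define D where "D = (\<lambda>\<omega>. W h \<omega> - W f \<omega> - c * W g \<omega>)"
  have [measurable]: "D \<in> borel_measurable M" unfolding D_def by measurable
  note I = wn_prod_integrable[OF wn] sq_int_prod
  have eqD: "(\<lambda>\<omega>. (D \<omega>)\<^sup>2) = (\<lambda>\<omega>. W h \<omega> * W h \<omega> + W f \<omega> * W f \<omega> + c\<^sup>2 * (W g \<omega> * W g \<omega>)
      - 2 * (W h \<omega> * W f \<omega>) - (2 * c) * (W h \<omega> * W g \<omega>) + (2 * c) * (W f \<omega> * W g \<omega>))"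
    unfolding D_def by (auto simp: power2_eq_square algebra_simps)
  have "(\<integral>\<omega>. (D \<omega>)\<^sup>2 \<partial>M) = (\<integral>\<omega>. W h \<omega> * W h \<omega> \<partial>M) + (\<integral>\<omega>. W f \<omega> * W f \<omega> \<partial>M) + c\<^sup>2 * (\<integral>\<omega>. W g \<omega> * W g \<omega> \<partial>M)
      - 2 * (\<integral>\<omega>. W h \<omega> * W f \<omega> \<partial>M) - (2 * c) * (\<integral>\<omega>. W h \<omega> * W g \<omega> \<partial>M) + (2 * c) * (\<integral>\<omega>. W f \<omega> * W g \<omega> \<partial>M)"
    unfolding eqD using I[OF h h] I[OF f f] I[OF g g] I[OF h f] I[OF h g] I[OF f g]
    by (simp add: Bochner_Integration.integral_add Bochner_Integration.integral_diff)
  also have "\<dots> = (\<integral>y. h y * h y \<partial>lborel) + (\<integral>y. f y * f y \<partial>lborel) + c\<^sup>2 * (\<integral>y. g y * g y \<partial>lborel)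
      - 2 * (\<integral>y. h y * f y \<partial>lborel) - (2 * c) * (\<integral>y. h y * g y \<partial>lborel) + (2 * c) * (\<integral>y. f y * g y \<partial>lborel)"
    using wn_cov[OF wn] f g h by simp
  also have "\<dots> = 0"
  proof -
    have e1: "(\<integral>y. h y * h y \<partial>lborel) = (\<integral>y. f y * f y \<partial>lborel) + (2*c) * (\<integral>y. f y * g y \<partial>lborel) + c\<^sup>2 * (\<integral>y. g y * g y \<partial>lborel)"
    proof -
      have "(\<lambda>y. h y * h y) = (\<lambda>y. f y * f y + (2*c) * (f y * g y) + c\<^sup>2 * (g y * g y))"
        unfolding h_def by (auto simp: power2_eq_square algebra_simps)
      then show ?thesis using I[OF f f] I[OF g g] I[OF f g] by simp
    qed
    have e2: "(\<integral>y. h y * f y \<partial>lborel) = (\<integral>y. f y * f y \<partial>lborel) + c * (\<integral>y. f y * g y \<partial>lborel)"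
    proof -
      have "(\<lambda>y. h y * f y) = (\<lambda>y. f y * f y + c * (f y * g y))"
        unfolding h_def by (auto simp: algebra_simps)
      then show ?thesis using I[OF f f] I[OF g g] I[OF f g] by simp
    qed
    have e3: "(\<integral>y. h y * g y \<partial>lborel) = (\<integral>y. f y * g y \<partial>lborel) + c * (\<integral>y. g y * g y \<partial>lborel)"
    proof -
      have "(\<lambda>y. h y * g y) = (\<lambda>y. f y * g y + c * (g y * g y))"
        unfolding h_def by (auto simp: algebra_simps)
      then show ?thesis using I[OF f f] I[OF g g] I[OF f g] by simp
    qed
    show ?thesis unfolding e1 e2 e3 by (simp add: algebra_simps power2_eq_square)
  qed
  finally have "(\<integral>\<omega>. (D \<omega>)\<^sup>2 \<partial>M) = 0" .
  moreover have "integrable M (\<lambda>\<omega>. (D \<omega>)\<^sup>2)"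
    unfolding eqD using I[OF h h] I[OF f f] I[OF g g] I[OF h f] I[OF h g] I[OF f g] by simp
  ultimately have "AE \<omega> in M. (D \<omega>)\<^sup>2 = 0"
    using integral_nonneg_eq_0_iff_AE[of M "\<lambda>\<omega>. (D \<omega>)\<^sup>2"] by simp
  then show ?thesis by eventually_elim (simp add: D_def h_def)
qed

lemma oind_alt: "oind a b t = (if a \<le> b then (if a \<le> t \<and> t \<le> b then 1 else 0)
   else (if b \<le> t \<and> t \<le> a then -1 else 0))"
  by (simp add: oind_def indicator_def)

lemma zkernel_alt: "zkernel z = (\<lambda>y. oind (fst z) (snd z) (snd y) * oind (fst z) (snd y) (fst y))"
  by (simp add: zkernel_def fun_eq_iff)

lemma zkernel_meas[measurable]: "zkernel z \<in> borel_measurable borel"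
  unfolding zkernel_alt oind_alt borel_prod[symmetric] by measurable

lemma zkernel_sq_int: "sq_int (zkernel z)"
proof -
  define m where "m = min (fst z) (snd z)"
  define N where "N = max (fst z) (snd z)"
  have bnd: "(zkernel z y)\<^sup>2 \<le> indicator (cbox (m,m) (N,N)) y" for y
    unfolding zkernel_alt oind_alt m_def N_def
    by (cases y) (auto simp: cbox_Pair_eq indicator_def)
  have "integrable lborel (indicator (cbox (m,m) (N,N)) :: real \<times> real \<Rightarrow> real)"
    by (intro integrable_real_indicator emeasure_lborel_cbox_finite) simp
  then have "integrable lborel (\<lambda>y. (zkernel z y)\<^sup>2)"
  proof (rule Bochner_Integration.integrable_bound)
    show "AE y in lborel. norm ((zkernel z y)\<^sup>2) \<le> norm (indicator (cbox (m,m) (N,N)) y :: real)"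
      using bnd by (auto simp: indicator_def)
  qed measurable
  then show ?thesis by (simp add: sq_int_def)
qed

lemma box_meas: "a < c \<Longrightarrow> b < d \<Longrightarrow> measure lborel (box (a::real, b::real) (c, d)) = (c - a) * (d - b)"
  by (simp add: measure_lborel_box_eq Basis_prod_def)

definition gk :: "real \<times> real \<Rightarrow> real \<Rightarrow> real \<Rightarrow> real \<times> real \<Rightarrow> real" where
  "gk x s e = (\<lambda>y. ((zkernel (fst x + s * e, snd x + e) y + (-1) * zkernel (fst x + s * e, snd x) y)
      + (-1) * zkernel (fst x, snd x + e) y) + 1 * zkernel x y)"

lemma gk_pos1:
  assumes e: "0 < e" "a \<noteq> b \<Longrightarrow> 2 * e < \<bar>a - b\<bar>"
    and y: "a < y1" "y1 < a + e" "b < y2" "y2 < b + e"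
  shows "1 \<le> (gk (a,b) 1 e (y1,y2))\<^sup>2"
  using e y unfolding gk_def zkernel_alt oind_alt
  by (cases "a < b"; cases "a = b") (auto simp: abs_if split: if_splits)

lemma gk_neg1:
  assumes e: "0 < e" "a \<noteq> b \<Longrightarrow> 2 * e < \<bar>a - b\<bar>"
    and y: "a - e < y1" "y1 < a" "b < y2" "y2 < b + e"
  shows "1 \<le> (gk (a,b) (-1) e (y1,y2))\<^sup>2"
  using e y unfolding gk_def zkernel_alt oind_alt
  by (cases "a < b"; cases "a = b") (auto simp: abs_if split: if_splits)

lemma normal_density_le: "0 < \<sigma> \<Longrightarrow> normal_density 0 \<sigma> y \<le> 1 / \<sigma>"
proof -
  assume s: "0 < \<sigma>"
  have "sqrt (2 * pi * \<sigma>\<^sup>2) = sqrt (2 * pi) * \<sigma>" using s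
    by (simp add: real_sqrt_mult)
  moreover have "1 \<le> sqrt (2 * pi)" using pi_gt3 by simp
  ultimately have "\<sigma> \<le> sqrt (2 * pi * \<sigma>\<^sup>2)" using s
    by (metis mult_le_cancel_right1 mult.commute less_le_not_le)
  then have "1 / sqrt (2 * pi * \<sigma>\<^sup>2) \<le> 1 / \<sigma>" using s
    by (intro divide_left_mono) auto
  moreover have "exp (-(y - 0)\<^sup>2/ (2 * \<sigma>\<^sup>2)) \<le> 1" by simp
  moreover have "0 \<le> 1 / sqrt (2 * pi * \<sigma>\<^sup>2)" by simp
  ultimately show ?thesis unfolding normal_density_def
    by (metis (no_types, lifting) exp_ge_zero mult_left_le mult_right_mono order_trans mult.commute mult_le_cancel_left1)
qed

lemma anti_conc:
  assumes wn: "white_noise M W" and g: "sq_int g" and sg: "0 < \<sigma>" "\<sigma>\<^sup>2 \<le> (\<integral>y. (g y)\<^sup>2 \<partial>lborel)"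
    and t: "0 \<le> t"
  shows "emeasure M {\<omega>\<in>space M. \<bar>W g \<omega>\<bar> \<le> t} \<le> ennreal (2 * t / \<sigma>)"
proof -
  define v where "v = (\<integral>y. (g y)\<^sup>2 \<partial>lborel)"
  have vpos: "0 < v" using sg unfolding v_def by (smt (verit) zero_less_power)
  have sv: "\<sigma> \<le> sqrt v" using sg vpos unfolding v_def by (simp add: real_le_rsqrt)
  have D: "distributed M lborel (W g) (normal_density 0 (sqrt v))"
    using wn g vpos by (simp add: white_noise_def centered_gaussian_def v_def)
  have [measurable]: "W g \<in> borel_measurable M" using wn g by (rule wn_meas)
  have "{\<omega>\<in>space M. \<bar>W g \<omega>\<bar> \<le> t} = W g -` {-t..t} \<inter> space M" by auto
  then have "emeasure M {\<omega>\<in>space M. \<bar>W g \<omega>\<bar> \<le> t} = emeasure (distr M lborel (W g)) {-t..t}"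
    by (simp add: emeasure_distr)
  also have "\<dots> = emeasure (density lborel (\<lambda>y. ennreal (normal_density 0 (sqrt v) y))) {-t..t}"
    using distributed_distr_eq_density[OF D] by simp
  also have "\<dots> = (\<integral>\<^sup>+ y. ennreal (normal_density 0 (sqrt v) y) * indicator {-t..t} y \<partial>lborel)"
    by (simp add: emeasure_density)
  also have "\<dots> \<le> (\<integral>\<^sup>+ y. ennreal (1 / \<sigma>) * indicator {-t..t} y \<partial>lborel)"
  proof (intro nn_integral_mono)
    fix y
    have "normal_density 0 (sqrt v) y \<le> 1 / sqrt v" using vpos by (intro normal_density_le) simp
    also have "\<dots> \<le> 1 / \<sigma>" using sv sg vpos by (auto intro!: divide_left_mono mult_pos_pos)
    finally show "ennreal (normal_density 0 (sqrt v) y) * indicator {-t..t} y \<le> ennreal (1 / \<sigma>) * indicator {-t..t} y"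
      by (auto simp: indicator_def ennreal_leI)
  qed
  also have "\<dots> = ennreal (1 / \<sigma>) * emeasure lborel {-t..t}"
    by (simp add: nn_integral_cmult_indicator)
  also have "\<dots> = ennreal (2 * t / \<sigma>)"
    using t sg by (simp add: ennreal_mult[symmetric])
  finally show ?thesis .
qed

lemma mem_box_pair: "((y1::real), (y2::real)) \<in> box (a, b) (c, d) \<longleftrightarrow> a < y1 \<and> y1 < c \<and> b < y2 \<and> y2 < d"
  by (auto simp: mem_box Basis_prod_def)

lemma gk_sq_int: "sq_int (gk x s e)"
  unfolding gk_def by (intro sq_int_lin zkernel_sq_int)

lemma gk_meas[measurable]: "gk x s e \<in> borel_measurable borel"
  using gk_sq_int by (simp add: sq_int_def)

lemma gk_var:
  assumes s: "s = 1 \<or> s = -1" and e: "0 < e" "fst x \<noteq> snd x \<Longrightarrow> 2 * e < \<bar>fst x - snd x\<bar>"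
  shows "e\<^sup>2 \<le> (\<integral>y. (gk x s e y)\<^sup>2 \<partial>lborel)"
proof -
  obtain a b where x: "x = (a, b)" by (cases x)
  define R where "R = box (min a (a + s * e), b) (max a (a + s * e), b + e)"
  have ind: "indicator R y \<le> (gk x s e y)\<^sup>2" for y
  proof (cases "y \<in> R")
    case True
    obtain y1 y2 where y: "y = (y1, y2)" by (cases y)
    show ?thesis
    proof (cases "s = 1")
      case True
      then show ?thesis using \<open>y \<in> R\<close> gk_pos1[of e a b y1 y2] e unfolding R_def x y
        by (auto simp: mem_box_pair)
    next
      case False
      then have "s = -1" using s by simp
      then show ?thesis using \<open>y \<in> R\<close> gk_neg1[of e a b y1 y2] e unfolding R_def x y
        by (auto simp: mem_box_pair)
    qed
  qed simp
  have "measure lborel R = e * e"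
    unfolding R_def using s e by (auto simp: box_meas)
  then have "e\<^sup>2 = (\<integral>y. indicator R y \<partial>lborel)"
    by (simp add: power2_eq_square)
  also have "\<dots> \<le> (\<integral>y. (gk x s e y)\<^sup>2 \<partial>lborel)"
  proof (rule integral_mono)
    show "integrable lborel (\<lambda>y. indicator R y :: real)"
      unfolding R_def by (intro integrable_real_indicator emeasure_lborel_box_finite) simp
    show "integrable lborel (\<lambda>y. (gk x s e y)\<^sup>2)" using gk_sq_int by (simp add: sq_int_def)
  qed (rule ind)
  finally show ?thesis .
qed

lemma gk_lin:
  assumes wn: "white_noise M W"
  shows "AE \<omega> in M. W (gk x s e) \<omega> = W (zkernel (fst x + s * e, snd x + e)) \<omega>
     - W (zkernel (fst x + s * e, snd x)) \<omega> - W (zkernel (fst x, snd x + e)) \<omega> + W (zkernel x) \<omega>"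
proof -
  note L = wn_lin[OF wn]
  note K = zkernel_sq_int
  have 1: "AE \<omega> in M. W (\<lambda>y. zkernel (fst x + s * e, snd x + e) y + (-1) * zkernel (fst x + s * e, snd x) y) \<omega>
     = W (zkernel (fst x + s * e, snd x + e)) \<omega> + (-1) * W (zkernel (fst x + s * e, snd x)) \<omega>"
    by (rule L[OF K K])
  have 2: "AE \<omega> in M. W (\<lambda>y. (zkernel (fst x + s * e, snd x + e) y + (-1) * zkernel (fst x + s * e, snd x) y) + (-1) * zkernel (fst x, snd x + e) y) \<omega>
     = W (\<lambda>y. zkernel (fst x + s * e, snd x + e) y + (-1) * zkernel (fst x + s * e, snd x) y) \<omega> + (-1) * W (zkernel (fst x, snd x + e)) \<omega>"
    by (rule L[OF sq_int_lin[OF K K] K])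
  have 3: "AE \<omega> in M. W (gk x s e) \<omega>
     = W (\<lambda>y. (zkernel (fst x + s * e, snd x + e) y + (-1) * zkernel (fst x + s * e, snd x) y) + (-1) * zkernel (fst x, snd x + e) y) \<omega> + 1 * W (zkernel x) \<omega>"
    unfolding gk_def by (rule L[OF sq_int_lin[OF sq_int_lin[OF K K] K] K])
  from 1 2 3 show ?thesis by eventually_elim simp
qed

theorem lemma1p2:
  fixes M :: "'a measure" and W :: "(real \<times> real \<Rightarrow> real) \<Rightarrow> 'a \<Rightarrow> real"
    and Z :: "real \<times> real \<Rightarrow> 'a \<Rightarrow> real"
    and x :: "real \<times> real" and \<kappa> s :: real
  assumes "white_noise M W"
    and "\<And>z. AE \<omega> in M. Z z \<omega> = W (zkernel z) \<omega> / 2"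
    and "\<And>\<omega>. \<omega> \<in> space M \<Longrightarrow> continuous_on UNIV (\<lambda>z. Z z \<omega>)"
    and "\<kappa> > 0"
    and "s = 1 \<or> s = -1"
  shows "AE \<omega> in M.
           Limsup (at (0::real))
             (\<lambda>e. ereal (\<bar>rect_incr (\<lambda>z. Z z \<omega>) s e x\<bar> / \<bar>e\<bar> powr (1 + \<kappa>))) = \<infinity>"
proof -
  note wn = assms(1) and ZW = assms(2) and kap = assms(4) and sgn = assms(5)
  interpret prob_space M using wn by (rule wn_prob)
  define \<delta> where "\<delta> = (if fst x = snd x then 1 else \<bar>fst x - snd x\<bar> / 4)"
  have dpos: "0 < \<delta>" by (simp add: \<delta>_def)
  define e where "e n = \<delta> / real (Suc n)" for n
  have epos: "0 < e n" for n using dpos by (simp add: e_def)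
  have ele: "e n \<le> \<delta>" for n using dpos by (simp add: e_def divide_le_eq)
  have econd: "fst x \<noteq> snd x \<Longrightarrow> 2 * e n < \<bar>fst x - snd x\<bar>" for n
    using ele[of n] by (simp add: \<delta>_def)
  have e_lim: "e \<longlonglongrightarrow> 0"
    unfolding e_def using LIMSEQ_Suc[OF lim_const_over_n[of \<delta>]] by simp
  define g where "g n = gk x s (e n)" for n
  have gsq: "sq_int (g n)" for n unfolding g_def by (rule gk_sq_int)
  have [measurable]: "W (g n) \<in> borel_measurable M" for n using wn gsq by (rule wn_meas)
  have gvar: "(e n)\<^sup>2 \<le> (\<integral>y. (g n y)\<^sup>2 \<partial>lborel)" for n
    unfolding g_def using sgn epos econd by (intro gk_var) auto
  define t where "t N n = real N * e n powr (1 + \<kappa>)" for N :: nat and n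
  have A: "AE \<omega> in M. \<forall>n. rect_incr (\<lambda>z. Z z \<omega>) s (e n) x = W (g n) \<omega> / 2"
  proof (subst AE_all_countable, intro allI)
    fix n
    show "AE \<omega> in M. rect_incr (\<lambda>z. Z z \<omega>) s (e n) x = W (g n) \<omega> / 2"
      using ZW[of "(fst x + s * e n, snd x + e n)"] ZW[of "(fst x + s * e n, snd x)"]
        ZW[of "(fst x, snd x + e n)"] ZW[of x] gk_lin[OF wn, of x s "e n"]
      unfolding g_def
      by eventually_elim (simp add: rect_incr_def diff_divide_distrib add_divide_distrib)
  qed
  have B: "AE \<omega> in M. \<forall>N::nat. \<forall>m::nat. \<exists>n\<ge>m. 2 * t N n < \<bar>W (g n) \<omega>\<bar>"
  proof (subst AE_all_countable, intro allI, subst AE_all_countable, intro allI)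
    fix N m :: nat
    define S where "S = {\<omega>\<in>space M. \<not> (\<exists>n\<ge>m. 2 * t N n < \<bar>W (g n) \<omega>\<bar>)}"
    have Ssets: "S \<in> sets M" unfolding S_def by measurable
    have "emeasure M S \<le> 0"
    proof (rule ennreal_le_epsilon)
      fix \<epsilon> :: real assume "0 < \<epsilon>"
      have "(\<lambda>n. e n powr \<kappa>) \<longlonglongrightarrow> 0"
        using e_lim kap by (intro tendsto_zero_powrI) (auto intro!: always_eventually less_imp_le[OF epos])
      then have "(\<lambda>n. (4 * real N) * e n powr \<kappa>) \<longlonglongrightarrow> 0"
        by (rule tendsto_mult_right_zero)
      then have "eventually (\<lambda>n. (4 * real N) * e n powr \<kappa> < \<epsilon>) sequentially"
        using \<open>0 < \<epsilon>\<close> by (rule order_tendstoD)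
      moreover have "eventually (\<lambda>n. m \<le> n) sequentially" by (rule eventually_ge_at_top)
      ultimately have "eventually (\<lambda>n. (4 * real N) * e n powr \<kappa> < \<epsilon> \<and> m \<le> n) sequentially"
        by (rule eventually_conj)
      then obtain N' where N': "\<And>n. N' \<le> n \<Longrightarrow> (4 * real N) * e n powr \<kappa> < \<epsilon> \<and> m \<le> n"
        unfolding eventually_sequentially by blast
      define n where "n = N'"
      have n: "m \<le> n" "(4 * real N) * e n powr \<kappa> < \<epsilon>" using N'[of N'] unfolding n_def by auto
      have "S \<subseteq> {\<omega>\<in>space M. \<bar>W (g n) \<omega>\<bar> \<le> 2 * t N n}"
        using n(1) unfolding S_def by (auto simp: not_less)
      then have "emeasure M S \<le> emeasure M {\<omega>\<in>space M. \<bar>W (g n) \<omega>\<bar> \<le> 2 * t N n}"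
        by (intro emeasure_mono) measurable
      also have "\<dots> \<le> ennreal (2 * (2 * t N n) / e n)"
        using wn gsq epos gvar by (intro anti_conc) (auto simp: t_def)
      also have "2 * (2 * t N n) / e n = (4 * real N) * e n powr \<kappa>"
      proof -
        have "e n powr (1 + \<kappa>) = e n * e n powr \<kappa>"
          using epos[of n] by (simp add: powr_add)
        then show ?thesis using epos[of n] by (simp add: t_def field_simps)
      qed
      finally show "emeasure M S \<le> 0 + ennreal \<epsilon>"
        using n(2) by (simp add: order_trans ennreal_leI)
    qed
    then have "emeasure M S = 0" by simp
    then show "AE \<omega> in M. \<exists>n\<ge>m. 2 * t N n < \<bar>W (g n) \<omega>\<bar>"
      using AE_iff_measurable[OF Ssets S_def[symmetric]] by simp
  qed
  from A B show ?thesis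
  proof eventually_elim
    case (elim \<omega>)
    define F where "F = (\<lambda>e. ereal (\<bar>rect_incr (\<lambda>z. Z z \<omega>) s e x\<bar> / \<bar>e\<bar> powr (1 + \<kappa>)))"
    have "Limsup (at (0::real)) F = \<infinity>"
    proof (rule Limsup_eqI)
      fix P assume "eventually P (at (0::real))"
      then obtain d where d: "0 < d" "\<And>y. y \<noteq> 0 \<Longrightarrow> dist y 0 < d \<Longrightarrow> P y"
        unfolding eventually_at by auto
      have "eventually (\<lambda>n. e n < d) sequentially"
        using e_lim d(1) by (rule order_tendstoD)
      then obtain m where m: "\<And>n. m \<le> n \<Longrightarrow> e n < d"
        unfolding eventually_at_top_linorder by auto
      have "(SUP y\<in>Collect P. F y) = \<infinity>"
      proof (rule SUP_PInfty)
        fix N :: nat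
        obtain n where n: "m \<le> n" "2 * t N n < \<bar>W (g n) \<omega>\<bar>" using elim(2) by blast
        have Pn: "P (e n)" using d(2)[of "e n"] m[OF n(1)] epos[of n] by simp
        have pp: "0 < e n powr (1 + \<kappa>)" using epos[of n] by simp
        have "real N * e n powr (1 + \<kappa>) \<le> \<bar>W (g n) \<omega> / 2\<bar>"
          using n(2) by (simp add: t_def)
        then have "real N \<le> \<bar>W (g n) \<omega> / 2\<bar> / e n powr (1 + \<kappa>)"
          using pp by (simp add: pos_le_divide_eq)
        moreover have r: "rect_incr (\<lambda>z. Z z \<omega>) s (e n) x = W (g n) \<omega> / 2" using elim(1) by blast
        have "F (e n) = ereal (\<bar>W (g n) \<omega> / 2\<bar> / e n powr (1 + \<kappa>))"
          unfolding F_def r using epos[of n] by simp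
        ultimately have "ereal (real N) \<le> F (e n)" by simp
        then show "\<exists>i\<in>Collect P. ereal (real N) \<le> F i" using Pn by blast
      qed
      then show "\<infinity> \<le> Sup (F ` Collect P)" by simp
    qed simp
    then show ?case unfolding F_def .
  qed
qed

end
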